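(* Assume the setup below. For every $\mathbf k\in\mathbb N^d$ with $|\mathbf k|>0$, $$\partial^{\mathbf k}H\Big|_{w=0}=\sum_{\substack{\mathbf i,\mathbf j\ne\mathbf 0\\ \mathbf i+\mathbf j=\mathbf k}}\ \sum_{\substack{\mathbf 0\ne\mathbf s\le\mathbf i\\ \mathbf 0\ne\mathbf t\le\mathbf j}}C(\mathbf i,\mathbf j)\,S^{\mathbf i}_{\mathbf s}S^{\mathbf j}_{\mathbf t}\,\mathbb E_x\big[A^{\mathbf s}(x)A^{\mathbf t}(x)\big],$$ where $C(\mathbf i,\mathbf j)=\prod\binom{i_u+j_u}{i_u}$, the product running over all $d$ coordinates $u$ of $\mathbb N^d$, and $\mathbb E_x$ is expectation with respect to $q$.
   Context: Fix integers $r\ge1$ and, for $1\le a\le r$, integers $n_a\ge1$ and $p_a\ge1$; put $d=\sum_{a=1}^r p_a$. An error syndrome is a tuple $\gamma=(\gamma_1,\dots,\gamma_r)$ of functions $\gamma_a:\{1,\dots,n_a\}\to\{0,1,\dots,p_a\}$. Its weight is $\mathrm{wt}(\gamma)=(s^a_b)_{1\le a\le r,\,1\le b\le p_a}\in\mathbb N^d$ with $s^a_b=|\gamma_a^{-1}(b)|$. Multi-indices $\mathbf k=(k^a_b)\in\mathbb N^d$ are indexed the same way; write $\mathbf k^a=(k^a_1,\dots,k^a_{p_a})$, $|\mathbf k^a|=\sum_b k^a_b$, $|\mathbf k|=\sum_a|\mathbf k^a|$, and $\mathbf s\le\mathbf k$ means $s^a_b\le k^a_b$ for all $a,b$. Given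 a finite set $\mathcal Q$ and a function $\pi:\prod_{a=1}^r\{0,\dots,p_a\}^{n_a}\to\mathcal Q$, set $\mathrm{eval}(\pi,\gamma)=\pi(\gamma_1(1),\dots,\gamma_1(n_1),\dots,\gamma_r(1),\dots,\gamma_r(n_r))$ and, for $\tau\in\mathcal Q$, define the polynomial in variables $x^a_b$ ($1\le a\le r$, $0\le b\le p_a$) $$f^\tau_\pi=\sum_\gamma \delta_{\tau=\mathrm{eval}(\pi,\gamma)}\prod_{a=1}^r\prod_{c=1}^{n_a}x^a_{\gamma_a(c)}$$ (sum over all error syndromes). We regard it as a polynomial in $w=(w^a_b)_{1\le a\le r,\,1\le b\le p_a}$ via the substitution $x^a_0=1-\sum_{b=1}^{p_a}w^a_b$, $x^a_b=w^a_b$ for $b\ge1$; the point $w=0$ corresponds to all $x^a_0=1$ and all other $x^a_b=0$. Write $\partial^{\mathbf k}=\prod_{a,b}(\partial/\partial w^a_b)^{k^a_b}$. For $\mathbf s\le\mathbf k$, $$S^{\mathbf k}_{\mathbf s}=\prod_{a=1}^r\Big\{\delta_{n_a\ge|\mathbf k^a|}(-1)^{|\mathbf k^a|-|\mathbf s^a|}\frac{(n_a-|\mathbf s^a|)!}{(n_a-|\mathbf k^a|)!}\prod_{b=1}^{p_a}\frac{k^a_b!}{(k^a_b-s^a_b)!}\Big\},$$ interpreted as $0$ when some $n_a<|\mathbf k^a|$. Further let $I$ be a finite set, $q$ a probability distribution on $I$, $y:I\to\mathcal Q$ a function, and for each $x\in I$ let $\pi_x:\prod_a\{0,\dots,p_a\}^{n_a}\to\mathcal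 Q$ be a function with $\pi_x(0,\dots,0)=y(x)$. Put $g(x,w)=\sum_{\tau\ne y(x)}f^\tau_{\pi_x}(w)$, $H(w)=\sum_{x\in I}q(x)g(x,w)^2$, and $A^{\mathbf s}(x)=|\{\gamma:\mathrm{wt}(\gamma)=\mathbf s,\ \mathrm{eval}(\pi_x,\gamma)\ne y(x)\}|$. (In the paper, $\pi_x$ encodes the computation paths of a universal Turing machine simulating a fixed machine $M$ for $t$ steps on input $x$, $g(x,w)$ is the probability of an output error for the noisy code $w$ near the code of $M$, and $A^{\mathbf s}(x)$ counts weight-$\mathbf s$ error syndromes producing an output error.) *)

theory Defs
  imports "HOL-Analysis.Analysis"
begin

text \<open>Coordinate index set of \<nat>^d: pairs (a,b) with 1 \<le> a \<le> r, 1 \<le> b \<le> p a.\<close>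
definition idx :: "nat \<Rightarrow> (nat \<Rightarrow> nat) \<Rightarrow> (nat \<times> nat) set" where
  "idx r p = {(a,b). a \<in> {1..r} \<and> b \<in> {1..p a}}"

definition idx_list :: "nat \<Rightarrow> (nat \<Rightarrow> nat) \<Rightarrow> (nat \<times> nat) list" where
  "idx_list r p = concat (map (\<lambda>a. map (\<lambda>b. (a,b)) [1..<p a + 1]) [1..<r + 1])"

text \<open>Multi-indices in \<nat>^d: functions on pairs, vanishing outside idx.\<close>
definition multi_indices :: "nat \<Rightarrow> (nat \<Rightarrow> nat) \<Rightarrow> (nat \<times> nat \<Rightarrow> nat) set" where
  "multi_indices r p = {k. \<forall>u. u \<notin> idx r p \<longrightarrow> k u = 0}"

definition mle :: "(nat \<times> nat \<Rightarrow> nat) \<Rightarrow> (nat \<times> nat \<Rightarrow> nat) \<Rightarrow> bool" where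
  "mle s k \<longleftrightarrow> (\<forall>u. s u \<le> k u)"

definition blocksum :: "(nat \<Rightarrow> nat) \<Rightarrow> (nat \<times> nat \<Rightarrow> nat) \<Rightarrow> nat \<Rightarrow> nat" where
  "blocksum p k a = (\<Sum>b\<in>{1..p a}. k (a,b))"

definition msum :: "nat \<Rightarrow> (nat \<Rightarrow> nat) \<Rightarrow> (nat \<times> nat \<Rightarrow> nat) \<Rightarrow> nat" where
  "msum r p k = (\<Sum>a\<in>{1..r}. blocksum p k a)"

text \<open>Error syndromes \<gamma> = (\<gamma>_1,...,\<gamma>_r), encoded as one function \<gamma> a c,
  with \<gamma> a c \<in> {0..p a} for 1 \<le> a \<le> r, 1 \<le> c \<le> n a, and \<gamma> a c = 0 elsewhere.\<close>
definition syndromes :: "nat \<Rightarrow> (nat \<Rightarrow> nat) \<Rightarrow> (nat \<Rightarrow> nat) \<Rightarrow> (nat \<Rightarrow> nat \<Rightarrow> nat) set" where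
  "syndromes r n p = {\<gamma>. \<forall>a c. \<gamma> a c \<le> (if a \<in> {1..r} \<and> c \<in> {1..n a} then p a else 0)}"

definition wt :: "(nat \<Rightarrow> nat) \<Rightarrow> (nat \<Rightarrow> nat \<Rightarrow> nat) \<Rightarrow> (nat \<times> nat \<Rightarrow> nat)" where
  "wt n \<gamma> = (\<lambda>(a,b). if b \<ge> 1 then card {c\<in>{1..n a}. \<gamma> a c = b} else 0)"

text \<open>The variable x^a_b after the substitution x^a_0 = 1 - \<Sum>_b w^a_b, x^a_b = w^a_b.\<close>
definition xvar :: "(nat \<Rightarrow> nat) \<Rightarrow> (nat \<times> nat \<Rightarrow> real) \<Rightarrow> nat \<Rightarrow> nat \<Rightarrow> real" where
  "xvar p w a b = (if b = 0 then 1 - (\<Sum>b'\<in>{1..p a}. w (a,b')) else w (a,b))"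

text \<open>f^\<tau>_\<pi> as a function of w. A map \<pi> on \<Prod>_a {0..p_a}^{n_a} is represented as a
  function on (extensional) error syndromes, so that eval(\<pi>,\<gamma>) = \<pi> \<gamma>.\<close>
definition fpoly :: "nat \<Rightarrow> (nat \<Rightarrow> nat) \<Rightarrow> (nat \<Rightarrow> nat) \<Rightarrow> 'q \<Rightarrow> ((nat \<Rightarrow> nat \<Rightarrow> nat) \<Rightarrow> 'q)
    \<Rightarrow> (nat \<times> nat \<Rightarrow> real) \<Rightarrow> real" where
  "fpoly r n p \<tau> \<pi> w = (\<Sum>\<gamma>\<in>syndromes r n p.
      (if \<tau> = \<pi> \<gamma> then (\<Prod>a\<in>{1..r}. \<Prod>c\<in>{1..n a}. xvar p w a (\<gamma> a c)) else 0))"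

definition pderiv_at :: "nat \<times> nat \<Rightarrow> ((nat \<times> nat \<Rightarrow> real) \<Rightarrow> real) \<Rightarrow> (nat \<times> nat \<Rightarrow> real) \<Rightarrow> real" where
  "pderiv_at u F = (\<lambda>w. deriv (\<lambda>t. F (w(u := t))) (w u))"

definition mderiv :: "nat \<Rightarrow> (nat \<Rightarrow> nat) \<Rightarrow> (nat \<times> nat \<Rightarrow> nat)
    \<Rightarrow> ((nat \<times> nat \<Rightarrow> real) \<Rightarrow> real) \<Rightarrow> (nat \<times> nat \<Rightarrow> real) \<Rightarrow> real" where
  "mderiv r p k F = foldr (\<lambda>u G. (pderiv_at u ^^ k u) G) (idx_list r p) F"

definition Scoef :: "nat \<Rightarrow> (nat \<Rightarrow> nat) \<Rightarrow> (nat \<Rightarrow> nat) \<Rightarrow> (nat \<times> nat \<Rightarrow> nat) \<Rightarrow> (nat \<times> nat \<Rightarrow> nat) \<Rightarrow> real" where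
  "Scoef r n p k s = (\<Prod>a\<in>{1..r}.
     (if n a \<ge> blocksum p k a then
        (-1) ^ (blocksum p k a - blocksum p s a)
        * fact (n a - blocksum p s a) / fact (n a - blocksum p k a)
        * (\<Prod>b\<in>{1..p a}. fact (k (a,b)) / fact (k (a,b) - s (a,b)))
      else 0))"

definition Ccoef :: "nat \<Rightarrow> (nat \<Rightarrow> nat) \<Rightarrow> (nat \<times> nat \<Rightarrow> nat) \<Rightarrow> (nat \<times> nat \<Rightarrow> nat) \<Rightarrow> real" where
  "Ccoef r p i j = (\<Prod>u\<in>idx r p. of_nat ((i u + j u) choose i u))"

definition gerr :: "nat \<Rightarrow> (nat \<Rightarrow> nat) \<Rightarrow> (nat \<Rightarrow> nat) \<Rightarrow> ('i \<Rightarrow> 'q::finite)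
    \<Rightarrow> ('i \<Rightarrow> (nat \<Rightarrow> nat \<Rightarrow> nat) \<Rightarrow> 'q) \<Rightarrow> 'i \<Rightarrow> (nat \<times> nat \<Rightarrow> real) \<Rightarrow> real" where
  "gerr r n p y \<pi> x w = (\<Sum>\<tau>\<in>UNIV - {y x}. fpoly r n p \<tau> (\<pi> x) w)"

definition Hfun :: "nat \<Rightarrow> (nat \<Rightarrow> nat) \<Rightarrow> (nat \<Rightarrow> nat) \<Rightarrow> ('i::finite \<Rightarrow> real) \<Rightarrow> ('i \<Rightarrow> 'q::finite)
    \<Rightarrow> ('i \<Rightarrow> (nat \<Rightarrow> nat \<Rightarrow> nat) \<Rightarrow> 'q) \<Rightarrow> (nat \<times> nat \<Rightarrow> real) \<Rightarrow> real" where
  "Hfun r n p q y \<pi> w = (\<Sum>x\<in>UNIV. q x * (gerr r n p y \<pi> x w)^2)"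

definition Acount :: "nat \<Rightarrow> (nat \<Rightarrow> nat) \<Rightarrow> (nat \<Rightarrow> nat) \<Rightarrow> ('i \<Rightarrow> 'q)
    \<Rightarrow> ('i \<Rightarrow> (nat \<Rightarrow> nat \<Rightarrow> nat) \<Rightarrow> 'q) \<Rightarrow> (nat \<times> nat \<Rightarrow> nat) \<Rightarrow> 'i \<Rightarrow> nat" where
  "Acount r n p y \<pi> s x = card {\<gamma>\<in>syndromes r n p. wt n \<gamma> = s \<and> \<pi> x \<gamma> \<noteq> y x}"

end

theory Submission
  imports Defs
begin

definition monom :: "nat \<Rightarrow> (nat \<Rightarrow> nat) \<Rightarrow> (nat \<times> nat \<Rightarrow> nat) \<Rightarrow> (nat \<times> nat \<Rightarrow> real) \<Rightarrow> real" where
  "monom r p m w = (\<Prod>u\<in>idx r p. w u ^ m u)"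

definition polyf :: "nat \<Rightarrow> (nat \<Rightarrow> nat) \<Rightarrow> 'j set \<Rightarrow> ('j \<Rightarrow> real) \<Rightarrow> ('j \<Rightarrow> nat \<times> nat \<Rightarrow> nat) \<Rightarrow> (nat \<times> nat \<Rightarrow> real) \<Rightarrow> real" where
  "polyf r p J c e = (\<lambda>w. \<Sum>j\<in>J. c j * monom r p (e j) w)"

fun ffr :: "nat \<Rightarrow> nat \<Rightarrow> real" where
  "ffr m 0 = 1"
| "ffr m (Suc l) = ffr m l * real (m - l)"

lemma idx_Sigma: "idx r p = Sigma {1..r} (\<lambda>a. {1..p a})"
  by (auto simp: idx_def)

lemma finite_idx[simp]: "finite (idx r p)"
  by (simp add: idx_Sigma)

lemma mem_idx_list: "(a,b) \<in> set (idx_list r p) \<longleftrightarrow> a \<in> {1..r} \<and> b \<in> {1..p a}"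
proof -
  have "set (idx_list r p) = (\<Union>x\<in>{1..<r+1}. set (map (Pair x) [1..<p x + 1]))"
    unfolding idx_list_def set_concat set_map image_image set_upt ..
  also have "\<dots> = (\<Union>x\<in>{1..<r+1}. Pair x ` {1..<p x + 1})" by (simp only: set_upt set_map)
  finally show ?thesis by (auto intro!: bexI[of _ a])
qed

lemma set_idx_list: "set (idx_list r p) = idx r p"
proof (rule set_eqI)
  fix x :: "nat \<times> nat"
  obtain a b where x: "x = (a,b)" by force
  show "x \<in> set (idx_list r p) \<longleftrightarrow> x \<in> idx r p"
    unfolding x mem_idx_list by (simp add: idx_def)
qed

lemma distinct_concat_pairs:
  "distinct xs \<Longrightarrow> (\<And>a. distinct (f a)) \<Longrightarrow> distinct (concat (map (\<lambda>a. map (\<lambda>b. (a,b)) (f a)) xs))"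
  by (induction xs) (auto simp: distinct_map inj_on_def)

lemma distinct_idx_list: "distinct (idx_list r p)"
  unfolding idx_list_def by (rule distinct_concat_pairs) auto

lemma monom_upd:
  fixes w :: "nat \<times> nat \<Rightarrow> real"
  assumes "u \<in> idx r p"
  shows "monom r p m (w(u:=t)) = t ^ m u * (\<Prod>v\<in>idx r p - {u}. w v ^ m v)"
proof -
  have "monom r p m (w(u:=t)) = (w(u:=t)) u ^ m u * (\<Prod>v\<in>idx r p - {u}. (w(u:=t)) v ^ m v)"
    unfolding monom_def using assms by (simp only: prod.remove[OF finite_idx assms])
  also have "(\<Prod>v\<in>idx r p - {u}. (w(u:=t)) v ^ m v) = (\<Prod>v\<in>idx r p - {u}. w v ^ m v)"
    by (rule prod.cong) auto
  also have "(w(u:=t)) u = t" by simp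
  finally show ?thesis .
qed

lemma pderiv_polyf:
  assumes u: "u \<in> idx r p" and J: "finite J"
  shows "pderiv_at u (polyf r p J c e) = polyf r p J (\<lambda>j. c j * real (e j u)) (\<lambda>j. (e j)(u := e j u - 1))"
proof
  fix w :: "nat \<times> nat \<Rightarrow> real"
  let ?R = "\<lambda>j. (\<Prod>v\<in>idx r p - {u}. w v ^ e j v)"
  have eq1: "polyf r p J c e (w(u:=(t::real))) = (\<Sum>j\<in>J. c j * (t ^ e j u * ?R j))" for t
    unfolding polyf_def using monom_upd[OF u] by simp
  have R2: "(\<Prod>v\<in>idx r p - {u}. w v ^ ((e j)(u := e j u - 1)) v) = ?R j" for j
    by (rule prod.cong) auto
  have "((\<lambda>t. \<Sum>j\<in>J. c j * (t ^ e j u * ?R j)) has_real_derivative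
        (\<Sum>j\<in>J. c j * (real (e j u) * t ^ (e j u - 1) * ?R j))) (at t)" for t
    by (auto intro!: derivative_eq_intros sum.cong)
  hence "deriv (\<lambda>t. polyf r p J c e (w(u:=t))) (w u) = (\<Sum>j\<in>J. c j * (real (e j u) * w u ^ (e j u - 1) * ?R j))"
    unfolding eq1 by (rule DERIV_imp_deriv)
  also have "\<dots> = polyf r p J (\<lambda>j. c j * real (e j u)) (\<lambda>j. (e j)(u := e j u - 1)) w"
  proof -
    have "monom r p ((e j)(u := e j u - 1)) w = w u ^ (e j u - 1) * ?R j" for j
      using monom_upd[OF u, of "(e j)(u := e j u - 1)" w "w u"] R2[of j] by simp
    thus ?thesis unfolding polyf_def by (simp add: algebra_simps)
  qed
  finally show "pderiv_at u (polyf r p J c e) w = polyf r p J (\<lambda>j. c j * real (e j u)) (\<lambda>j. (e j)(u := e j u - 1)) w"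
    unfolding pderiv_at_def .
qed

lemma pderiv_polyf_iter:
  assumes u: "u \<in> idx r p" and J: "finite J"
  shows "(pderiv_at u ^^ l) (polyf r p J c e) = polyf r p J (\<lambda>j. c j * ffr (e j u) l) (\<lambda>j. (e j)(u := e j u - l))"
proof (induction l)
  case 0
  then show ?case by (simp add: fun_upd_idem)
next
  case (Suc l)
  have "(pderiv_at u ^^ Suc l) (polyf r p J c e) = pderiv_at u (polyf r p J (\<lambda>j. c j * ffr (e j u) l) (\<lambda>j. (e j)(u := e j u - l)))"
    by (simp only: funpow.simps(2) o_apply Suc.IH)
  also have "\<dots> = polyf r p J (\<lambda>j. c j * ffr (e j u) l * real (((e j)(u := e j u - l)) u)) (\<lambda>j. ((e j)(u := e j u - l))(u := ((e j)(u := e j u - l)) u - 1))"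
    by (rule pderiv_polyf[OF u J])
  also have "\<dots> = polyf r p J (\<lambda>j. c j * ffr (e j u) (Suc l)) (\<lambda>j. (e j)(u := e j u - Suc l))"
    by (rule arg_cong2[where f="polyf r p J"]) (auto simp: fun_eq_iff)
  finally show ?case .
qed

lemma foldr_polyf:
  assumes "distinct L" "set L \<subseteq> idx r p" and J: "finite J"
  shows "foldr (\<lambda>u G. (pderiv_at u ^^ k u) G) L (polyf r p J c e) =
     polyf r p J (\<lambda>j. c j * (\<Prod>v\<in>set L. ffr (e j v) (k v))) (\<lambda>j v. if v \<in> set L then e j v - k v else e j v)"
  using assms(1,2)
proof (induction L)
  case Nil
  then show ?case by simp
next
  case (Cons u L)
  have u: "u \<in> idx r p" and nu: "u \<notin> set L" and dL: "distinct L" and sL: "set L \<subseteq> idx r p"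
    using Cons.prems by auto
  let ?cL = "\<lambda>j. c j * (\<Prod>v\<in>set L. ffr (e j v) (k v))"
  let ?eL = "\<lambda>j v. if v \<in> set L then e j v - k v else e j v"
  have "foldr (\<lambda>u G. (pderiv_at u ^^ k u) G) (u # L) (polyf r p J c e) =
      (pderiv_at u ^^ k u) (polyf r p J ?cL ?eL)"
    using Cons.IH[OF dL sL] by simp
  also have "\<dots> = polyf r p J (\<lambda>j. ?cL j * ffr (?eL j u) (k u)) (\<lambda>j. (?eL j)(u := ?eL j u - k u))"
    by (rule pderiv_polyf_iter[OF u J])
  also have "\<dots> = polyf r p J (\<lambda>j. c j * (\<Prod>v\<in>set (u # L). ffr (e j v) (k v))) (\<lambda>j v. if v \<in> set (u # L) then e j v - k v else e j v)"
    by (rule arg_cong2[where f="polyf r p J"]) (use nu in \<open>auto simp: fun_eq_iff\<close>)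
  finally show ?case .
qed

lemma ffr_gt: "m < l \<Longrightarrow> ffr m l = 0"
  by (induction l) (auto simp: less_Suc_eq)

lemma ffr_fact: "l \<le> m \<Longrightarrow> ffr m l * fact (m - l) = fact m"
proof (induction l)
  case 0 then show ?case by simp
next
  case (Suc l)
  have m: "m - l = Suc (m - Suc l)" using Suc.prems by arith
  have f: "fact (m - l) = real (m - l) * (fact (m - Suc l) :: real)" unfolding m by simp
  have "ffr m (Suc l) * fact (m - Suc l) = ffr m l * fact (m - l)"
    by (simp add: f)
  then show ?case using Suc by simp
qed

lemma ffr_self: "ffr m m = fact m"
  using ffr_fact[of m m] by simp

lemma ffr_add: "ffr N l1 * ffr (N - l1) l2 = ffr N (l1 + l2)"
  by (induction l2) (auto simp: algebra_simps)

definition kf :: "nat \<Rightarrow> (nat \<Rightarrow> nat) \<Rightarrow> (nat \<times> nat \<Rightarrow> nat) \<Rightarrow> real" where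
  "kf r p k = (\<Prod>u\<in>idx r p. fact (k u))"

lemma mi_out: "k \<in> multi_indices r p \<Longrightarrow> u \<notin> idx r p \<Longrightarrow> k u = 0"
  unfolding multi_indices_def by blast

lemma mi_eqI: fixes k m :: "nat \<times> nat \<Rightarrow> nat" shows "k \<in> multi_indices r p \<Longrightarrow> m \<in> multi_indices r p \<Longrightarrow> (\<forall>u\<in>idx r p. k u = m u) \<Longrightarrow> k = m"
  by (auto simp: multi_indices_def fun_eq_iff)

lemma mderiv_polyf0:
  assumes J: "finite J" and e: "\<forall>j\<in>J. e j \<in> multi_indices r p" and k: "k \<in> multi_indices r p"
  shows "mderiv r p k (polyf r p J c e) (\<lambda>_. 0) = kf r p k * (\<Sum>j\<in>J. if e j = k then c j else 0)"
proof -
  have "mderiv r p k (polyf r p J c e) = polyf r p J (\<lambda>j. c j * (\<Prod>v\<in>idx r p. ffr (e j v) (k v)))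
        (\<lambda>j v. if v \<in> idx r p then e j v - k v else e j v)"
    unfolding mderiv_def set_idx_list[symmetric]
    by (rule foldr_polyf[OF distinct_idx_list _ J]) (simp add: set_idx_list)
  hence "mderiv r p k (polyf r p J c e) (\<lambda>_. 0) =
     (\<Sum>j\<in>J. c j * (\<Prod>v\<in>idx r p. ffr (e j v) (k v)) * (\<Prod>u\<in>idx r p. (0::real) ^ (e j u - k u)))"
    by (simp add: polyf_def monom_def)
  also have "\<dots> = (\<Sum>j\<in>J. kf r p k * (if e j = k then c j else 0))"
  proof (rule sum.cong[OF refl])
    fix j assume j: "j \<in> J"
    show "c j * (\<Prod>v\<in>idx r p. ffr (e j v) (k v)) * (\<Prod>u\<in>idx r p. (0::real) ^ (e j u - k u)) =
          kf r p k * (if e j = k then c j else 0)"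
    proof (cases "e j = k")
      case True
      then show ?thesis by (simp add: ffr_self kf_def)
    next
      case False
      then obtain v where v: "v \<in> idx r p" "e j v \<noteq> k v"
        using mi_eqI[OF _ k, of "e j"] e j by blast
      show ?thesis
      proof (cases "e j v < k v")
        case True
        hence "(\<Prod>v\<in>idx r p. ffr (e j v) (k v)) = 0"
          using v by (auto intro!: bexI[of _ v] simp: ffr_gt)
        then show ?thesis using False by simp
      next
        case False
        hence "(\<Prod>u\<in>idx r p. (0::real) ^ (e j u - k u)) = 0"
          using v by (auto intro!: bexI[of _ v])
        then show ?thesis using \<open>e j \<noteq> k\<close> by simp
      qed
    qed
  qed
  finally show ?thesis by (simp add: sum_distrib_left)
qed

definition isPoly :: "nat \<Rightarrow> (nat \<Rightarrow> nat) \<Rightarrow> ((nat \<times> nat \<Rightarrow> real) \<Rightarrow> real) \<Rightarrow> bool" where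
  "isPoly r p F \<longleftrightarrow> (\<exists>M c. finite M \<and> M \<subseteq> multi_indices r p \<and> F = polyf r p M c id)"

lemma isPolyI:
  assumes J: "finite J" and e: "\<forall>j\<in>J. e j \<in> multi_indices r p" and F: "F = polyf r p J c e"
  shows "isPoly r p F"
proof -
  let ?c = "\<lambda>m. \<Sum>j\<in>{j\<in>J. e j = m}. c j"
  have "polyf r p J c e w = polyf r p (e ` J) ?c id w" for w
  proof -
    have "polyf r p J c e w = (\<Sum>m\<in>e ` J. \<Sum>j\<in>{j\<in>J. e j = m}. c j * monom r p (e j) w)"
      unfolding polyf_def by (rule sum.image_gen[OF J])
    also have "\<dots> = polyf r p (e ` J) ?c id w"
      unfolding polyf_def by (auto simp: sum_distrib_right intro!: sum.cong)
    finally show ?thesis .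
  qed
  thus ?thesis unfolding isPoly_def using J e F by (intro exI[of _ "e ` J"] exI[of _ ?c]) auto
qed

lemma sum_Sigma':
  "finite X \<Longrightarrow> \<forall>x\<in>X. finite (M x) \<Longrightarrow> (\<Sum>j\<in>Sigma X M. f j) = (\<Sum>x\<in>X. \<Sum>m\<in>M x. f (x,m))"
  by (simp add: sum.Sigma)

lemma sum_polyf:
  assumes "finite X" "\<forall>x\<in>X. finite (M x)"
  shows "(\<lambda>w. \<Sum>x\<in>X. a x * polyf r p (M x) (c x) id w) = polyf r p (Sigma X M) (\<lambda>j. a (fst j) * c (fst j) (snd j)) snd"
proof
  fix w
  show "(\<Sum>x\<in>X. a x * polyf r p (M x) (c x) id w) = polyf r p (Sigma X M) (\<lambda>j. a (fst j) * c (fst j) (snd j)) snd w"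
    unfolding polyf_def using assms
    by (simp add: sum_Sigma' sum_distrib_left mult.assoc)
qed

lemma isPoly_choice:
  assumes "\<forall>x\<in>X. isPoly r p (F x)"
  obtains M c where "\<forall>x\<in>X. finite (M x) \<and> M x \<subseteq> multi_indices r p \<and> F x = polyf r p (M x) (c x) id"
proof -
  have "\<forall>x\<in>X. \<exists>Mc. finite (fst Mc) \<and> fst Mc \<subseteq> multi_indices r p \<and> F x = polyf r p (fst Mc) (snd Mc) id"
    using assms unfolding isPoly_def by force
  then obtain Mc where "\<forall>x\<in>X. finite (fst (Mc x)) \<and> fst (Mc x) \<subseteq> multi_indices r p \<and> F x = polyf r p (fst (Mc x)) (snd (Mc x)) id"
    by metis
  thus ?thesis using that[of "\<lambda>x. fst (Mc x)" "\<lambda>x. snd (Mc x)"] by blast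
qed

lemma isPoly_sum:
  assumes X: "finite X" and F: "\<forall>x\<in>X. isPoly r p (F x)"
  shows "isPoly r p (\<lambda>w. \<Sum>x\<in>X. a x * F x w)"
proof -
  obtain M c where Mc: "\<forall>x\<in>X. finite (M x) \<and> M x \<subseteq> multi_indices r p \<and> F x = polyf r p (M x) (c x) id"
    using isPoly_choice[OF F] by blast
  have "(\<lambda>w. \<Sum>x\<in>X. a x * F x w) = (\<lambda>w. \<Sum>x\<in>X. a x * polyf r p (M x) (c x) id w)"
    using Mc by (auto intro!: sum.cong)
  also have "\<dots> = polyf r p (Sigma X M) (\<lambda>j. a (fst j) * c (fst j) (snd j)) snd" by (rule sum_polyf) (use X Mc in auto)
  finally show ?thesis
    by (rule isPolyI[rotated 2]) (use X Mc in auto)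
qed

lemma mderiv_sum0:
  assumes X: "finite X" and F: "\<forall>x\<in>X. isPoly r p (F x)" and k: "k \<in> multi_indices r p"
  shows "mderiv r p k (\<lambda>w. \<Sum>x\<in>X. a x * F x w) (\<lambda>_. 0) = (\<Sum>x\<in>X. a x * mderiv r p k (F x) (\<lambda>_. 0))"
proof -
  obtain M c where Mc: "\<forall>x\<in>X. finite (M x) \<and> M x \<subseteq> multi_indices r p \<and> F x = polyf r p (M x) (c x) id"
    using isPoly_choice[OF F] by blast
  have "(\<lambda>w. \<Sum>x\<in>X. a x * F x w) = (\<lambda>w. \<Sum>x\<in>X. a x * polyf r p (M x) (c x) id w)"
    using Mc by (auto intro!: sum.cong)
  also have "\<dots> = polyf r p (Sigma X M) (\<lambda>j. a (fst j) * c (fst j) (snd j)) snd" by (rule sum_polyf) (use X Mc in auto)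
  finally have eq: "(\<lambda>w. \<Sum>x\<in>X. a x * F x w) = polyf r p (Sigma X M) (\<lambda>j. a (fst j) * c (fst j) (snd j)) snd" .
  have "mderiv r p k (\<lambda>w. \<Sum>x\<in>X. a x * F x w) (\<lambda>_. 0) =
        kf r p k * (\<Sum>j\<in>Sigma X M. if snd j = k then a (fst j) * c (fst j) (snd j) else 0)"
    unfolding eq by (rule mderiv_polyf0) (use X Mc k in auto)
  also have "\<dots> = kf r p k * (\<Sum>x\<in>X. \<Sum>m\<in>M x. if m = k then a x * c x m else 0)"
    using X Mc by (simp add: sum_Sigma' cong: if_cong)
  also have "\<dots> = (\<Sum>x\<in>X. a x * (kf r p k * (\<Sum>m\<in>M x. if id m = k then c x m else 0)))"
    by (auto simp: sum_distrib_left if_distrib intro!: sum.cong)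
  also have "\<dots> = (\<Sum>x\<in>X. a x * mderiv r p k (F x) (\<lambda>_. 0))"
  proof (rule sum.cong[OF refl])
    fix x assume x: "x \<in> X"
    have "mderiv r p k (polyf r p (M x) (c x) id) (\<lambda>_. 0) = kf r p k * (\<Sum>m\<in>M x. if id m = k then c x m else 0)"
      by (rule mderiv_polyf0) (use x Mc k in auto)
    thus "a x * (kf r p k * (\<Sum>m\<in>M x. if id m = k then c x m else 0)) = a x * mderiv r p k (F x) (\<lambda>_. 0)"
      using x Mc by simp
  qed
  finally show ?thesis .
qed

lemma zero_mi[simp]: "(\<lambda>_. 0) \<in> multi_indices r p"
  by (simp add: multi_indices_def)

lemma monom_zero[simp]: "monom r p (\<lambda>_. 0) w = 1"
  by (simp add: monom_def)

lemma isPoly_const: "isPoly r p (\<lambda>_. a)"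
  by (rule isPolyI[where J="{0::nat}" and e="\<lambda>_. \<lambda>_. 0" and c="\<lambda>_. a"]) (auto simp: polyf_def)

lemma isPoly_coord:
  assumes u: "u \<in> idx r p"
  shows "isPoly r p (\<lambda>w. w u)"
proof (rule isPolyI[where J="{0::nat}" and e="\<lambda>_ v. if v = u then 1 else 0" and c="\<lambda>_. 1"])
  show "\<forall>j\<in>{0::nat}. (\<lambda>v. if v = u then 1 else 0) \<in> multi_indices r p"
    using u by (auto simp: multi_indices_def)
  have "monom r p (\<lambda>v. if v = u then 1 else 0) w = w u" for w
  proof -
    have "monom r p (\<lambda>v. if v = u then 1 else 0) w = (\<Prod>v\<in>idx r p. if v = u then w v else 1)"
      unfolding monom_def by (rule prod.cong) auto
    thus ?thesis using u by simp
  qed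
  thus "(\<lambda>w. w u) = polyf r p {0::nat} (\<lambda>_. 1) (\<lambda>_ v. if v = u then 1 else 0)"
    by (simp add: polyf_def)
qed auto

lemma monom_add: "monom r p (\<lambda>u. m1 u + m2 u) w = monom r p m1 w * monom r p m2 w"
  by (simp add: monom_def power_add prod.distrib)

lemma add_mi: "m1 \<in> multi_indices r p \<Longrightarrow> m2 \<in> multi_indices r p \<Longrightarrow> (\<lambda>u. m1 u + m2 u) \<in> multi_indices r p"
  by (simp add: multi_indices_def)

lemma mult_polyf:
  assumes "finite M1" "finite M2"
  shows "(\<lambda>w. polyf r p M1 c1 id w * polyf r p M2 c2 id w) =
    polyf r p (M1 \<times> M2) (\<lambda>(m1,m2). c1 m1 * c2 m2) (\<lambda>(m1,m2) u. m1 u + m2 u)"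
proof
  fix w
  show "polyf r p M1 c1 id w * polyf r p M2 c2 id w =
    polyf r p (M1 \<times> M2) (\<lambda>(m1,m2). c1 m1 * c2 m2) (\<lambda>(m1,m2) u. m1 u + m2 u) w"
    unfolding polyf_def sum_product sum.cartesian_product
    by (auto simp: monom_add intro!: sum.cong)
qed

lemma isPoly_mult:
  assumes F: "isPoly r p F" and G: "isPoly r p G"
  shows "isPoly r p (\<lambda>w. F w * G w)"
proof -
  obtain M1 c1 where 1: "finite M1" "M1 \<subseteq> multi_indices r p" "F = polyf r p M1 c1 id"
    using F unfolding isPoly_def by blast
  obtain M2 c2 where 2: "finite M2" "M2 \<subseteq> multi_indices r p" "G = polyf r p M2 c2 id"
    using G unfolding isPoly_def by blast
  show ?thesis
    by (rule isPolyI[of "M1 \<times> M2" "\<lambda>(m1,m2) u. m1 u + m2 u" _ _ _ "\<lambda>(m1,m2). c1 m1 * c2 m2"])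
      (use 1 2 in \<open>auto simp: mult_polyf add_mi subset_iff\<close>)
qed

lemma isPoly_prod:
  assumes "finite A" "\<forall>a\<in>A. isPoly r p (F a)"
  shows "isPoly r p (\<lambda>w. \<Prod>a\<in>A. F a w)"
  using assms
proof (induction A rule: finite_induct)
  case empty
  then show ?case by (simp add: isPoly_const)
next
  case (insert x F)
  then show ?case by (simp add: isPoly_mult)
qed

lemma isPoly_power:
  assumes "isPoly r p F"
  shows "isPoly r p (\<lambda>w. F w ^ n)"
  by (induction n) (simp_all add: isPoly_const isPoly_mult assms)

lemma isPoly_diff:
  assumes F: "isPoly r p F" and G: "isPoly r p G"
  shows "isPoly r p (\<lambda>w. F w - G w)"
proof -
  have "isPoly r p (\<lambda>w. \<Sum>b\<in>(UNIV::bool set). (if b then 1 else -1) * (if b then F else G) w)"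
    by (rule isPoly_sum) (use F G in auto)
  thus ?thesis by (simp add: UNIV_bool)
qed

lemma finite_mle:
  assumes k: "k \<in> multi_indices r p"
  shows "finite {i. mle i k}"
proof -
  have "{i. mle i k} \<subseteq> {f. \<forall>x. (x \<in> idx r p \<longrightarrow> f x \<in> {0..(\<Sum>u\<in>idx r p. k u)}) \<and> (x \<notin> idx r p \<longrightarrow> f x = 0)}"
  proof (safe)
    fix i x assume "mle i k"
    hence ik: "i x \<le> k x" for x unfolding mle_def by blast
    show "x \<in> idx r p \<Longrightarrow> i x \<in> {0..(\<Sum>u\<in>idx r p. k u)}"
      using ik[of x] member_le_sum[of x "idx r p" k] by auto
    show "x \<notin> idx r p \<Longrightarrow> i x = 0" using ik[of x] mi_out[OF k] by fastforce
  qed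
  thus ?thesis by (rule finite_subset) (intro finite_set_of_finite_funs; simp)
qed

lemma mle_mi: "k \<in> multi_indices r p \<Longrightarrow> mle i k \<Longrightarrow> i \<in> multi_indices r p"
  by (auto simp: multi_indices_def mle_def) (metis le_zero_eq)

lemma diff_mi: "k \<in> multi_indices r p \<Longrightarrow> (\<lambda>u. k u - i u) \<in> multi_indices r p"
  by (auto simp: multi_indices_def)

lemma binom_fact_real: "i \<le> k \<Longrightarrow> real ((i + (k - i)) choose i) * fact i * fact (k - i) = (fact k :: real)"
proof -
  assume "i \<le> k"
  hence "fact i * fact (k - i) * (k choose i) = fact k" by (rule binomial_fact_lemma)
  hence "real (fact i * fact (k - i) * (k choose i)) = real (fact k)" by simp
  thus ?thesis using \<open>i \<le> k\<close> by (simp add: of_nat_mult algebra_simps)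
qed

lemma kf_split:
  assumes "mle i k"
  shows "Ccoef r p i (\<lambda>u. k u - i u) * kf r p i * kf r p (\<lambda>u. k u - i u) = kf r p k"
proof -
  have "Ccoef r p i (\<lambda>u. k u - i u) * kf r p i * kf r p (\<lambda>u. k u - i u) =
     (\<Prod>u\<in>idx r p. real ((i u + (k u - i u)) choose i u) * fact (i u) * fact (k u - i u))"
    by (simp add: Ccoef_def kf_def prod.distrib)
  also have "\<dots> = kf r p k" unfolding kf_def
    using assms unfolding mle_def by (intro prod.cong refl binom_fact_real) blast
  finally show ?thesis .
qed

lemma leibniz0:
  assumes F: "isPoly r p F" and G: "isPoly r p G" and k: "k \<in> multi_indices r p"
  shows "mderiv r p k (\<lambda>w. F w * G w) (\<lambda>_. 0) =
    (\<Sum>i\<in>{i. mle i k}. Ccoef r p i (\<lambda>u. k u - i u) * mderiv r p i F (\<lambda>_. 0) * mderiv r p (\<lambda>u. k u - i u) G (\<lambda>_. 0))"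
proof -
  obtain M1 c1 where 1: "finite M1" "M1 \<subseteq> multi_indices r p" "F = polyf r p M1 c1 id"
    using F unfolding isPoly_def by blast
  obtain M2 c2 where 2: "finite M2" "M2 \<subseteq> multi_indices r p" "G = polyf r p M2 c2 id"
    using G unfolding isPoly_def by blast
  let ?I = "{i. mle i k}"
  have fI: "finite ?I" by (rule finite_mle[OF k])
  have "mderiv r p k (\<lambda>w. F w * G w) (\<lambda>_. 0) =
     kf r p k * (\<Sum>j\<in>M1 \<times> M2. if (case j of (m1,m2) \<Rightarrow> \<lambda>u. m1 u + m2 u) = k then (case j of (m1,m2) \<Rightarrow> c1 m1 * c2 m2) else 0)"
    unfolding 1 2 mult_polyf[OF 1(1) 2(1)]
    by (rule mderiv_polyf0) (use 1 2 k in \<open>auto simp: add_mi subset_iff\<close>)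
  also have "\<dots> = kf r p k * (\<Sum>m1\<in>M1. \<Sum>m2\<in>M2. if (\<lambda>u. m1 u + m2 u) = k then c1 m1 * c2 m2 else 0)"
    unfolding sum.cartesian_product
    by (rule arg_cong[where f="\<lambda>z. kf r p k * z"], rule sum.cong) (auto split: prod.splits)
  also have "\<dots> = kf r p k * (\<Sum>m1\<in>M1. \<Sum>m2\<in>M2. \<Sum>i\<in>?I. if m1 = i \<and> m2 = (\<lambda>u. k u - i u) then c1 m1 * c2 m2 else 0)"
  proof -
    have "(if (\<lambda>u. m1 u + m2 u) = k then c1 m1 * c2 m2 else 0) =
          (\<Sum>i\<in>?I. if m1 = i \<and> m2 = (\<lambda>u. k u - i u) then c1 m1 * c2 m2 else 0)" for m1 m2 :: "nat \<times> nat \<Rightarrow> nat"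
    proof -
      have "(\<Sum>i\<in>?I. if m1 = i \<and> m2 = (\<lambda>u. k u - i u) then c1 m1 * c2 m2 else 0) =
            (\<Sum>i\<in>?I. if m1 = i then (if m2 = (\<lambda>u. k u - m1 u) then c1 m1 * c2 m2 else 0) else 0)"
        by (rule sum.cong) auto
      also have "\<dots> = (if m1 \<in> ?I then (if m2 = (\<lambda>u. k u - m1 u) then c1 m1 * c2 m2 else 0) else 0)"
        using fI by simp
      also have "\<dots> = (if (\<lambda>u. m1 u + m2 u) = k then c1 m1 * c2 m2 else 0)"
      proof -
        have "(m1 \<in> ?I \<and> m2 = (\<lambda>u. k u - m1 u)) \<longleftrightarrow> (\<lambda>u. m1 u + m2 u) = k"
          by (auto simp: mle_def fun_eq_iff) (metis add_diff_cancel_left' le_add1)+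
        thus ?thesis by auto
      qed
      finally show ?thesis by simp
    qed
    thus ?thesis by simp
  qed
  also have "\<dots> = kf r p k * (\<Sum>i\<in>?I. (\<Sum>m1\<in>M1. if m1 = i then c1 m1 else 0) * (\<Sum>m2\<in>M2. if m2 = (\<lambda>u. k u - i u) then c2 m2 else 0))"
  proof -
    let ?X = "\<lambda>i m1 m2. if m1 = i \<and> m2 = (\<lambda>u. k u - i u) then c1 m1 * c2 m2 else (0::real)"
    have "(\<Sum>m1\<in>M1. \<Sum>m2\<in>M2. \<Sum>i\<in>?I. ?X i m1 m2) = (\<Sum>m1\<in>M1. \<Sum>i\<in>?I. \<Sum>m2\<in>M2. ?X i m1 m2)"
      by (rule sum.cong[OF refl], rule sum.swap)
    also have "\<dots> = (\<Sum>i\<in>?I. \<Sum>m1\<in>M1. \<Sum>m2\<in>M2. ?X i m1 m2)"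
      by (rule sum.swap)
    also have "\<dots> = (\<Sum>i\<in>?I. (\<Sum>m1\<in>M1. if m1 = i then c1 m1 else 0) * (\<Sum>m2\<in>M2. if m2 = (\<lambda>u. k u - i u) then c2 m2 else 0))"
      unfolding sum_product by (intro sum.cong refl) simp
    finally show ?thesis by simp
  qed
  also have "\<dots> = (\<Sum>i\<in>?I. Ccoef r p i (\<lambda>u. k u - i u) * (kf r p i * (\<Sum>m1\<in>M1. if id m1 = i then c1 m1 else 0)) * (kf r p (\<lambda>u. k u - i u) * (\<Sum>m2\<in>M2. if id m2 = (\<lambda>u. k u - i u) then c2 m2 else 0)))"
    unfolding sum_distrib_left[of "kf r p k"]
  proof (rule sum.cong[OF refl])
    fix i assume "i \<in> ?I"
    hence "mle i k" by simp
    hence e: "kf r p k = Ccoef r p i (\<lambda>u. k u - i u) * kf r p i * kf r p (\<lambda>u. k u - i u)"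
      by (rule kf_split[symmetric])
    show "kf r p k * ((\<Sum>m1\<in>M1. if m1 = i then c1 m1 else 0) * (\<Sum>m2\<in>M2. if m2 = (\<lambda>u. k u - i u) then c2 m2 else 0)) =
       Ccoef r p i (\<lambda>u. k u - i u) * (kf r p i * (\<Sum>m1\<in>M1. if id m1 = i then c1 m1 else 0)) * (kf r p (\<lambda>u. k u - i u) * (\<Sum>m2\<in>M2. if id m2 = (\<lambda>u. k u - i u) then c2 m2 else 0))"
      unfolding e id_apply by (simp only: mult_ac)
  qed
  also have "\<dots> = (\<Sum>i\<in>?I. Ccoef r p i (\<lambda>u. k u - i u) * mderiv r p i F (\<lambda>_. 0) * mderiv r p (\<lambda>u. k u - i u) G (\<lambda>_. 0))"
    unfolding 1 2 using 1 2 k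
    by (intro sum.cong refl) (auto simp: mderiv_polyf0 subset_iff mle_mi diff_mi)
  finally show ?thesis .
qed

definition Lpow :: "nat \<Rightarrow> (nat \<Rightarrow> nat) \<Rightarrow> (nat \<Rightarrow> nat) \<Rightarrow> (nat \<times> nat \<Rightarrow> real) \<Rightarrow> real" where
  "Lpow r p N w = (\<Prod>a\<in>{1..r}. xvar p w a 0 ^ N a)"

lemma xvar0_upd:
  assumes u: "(a0,b0) \<in> idx r p"
  shows "xvar p (w((a0,b0):=t)) a 0 = (if a = a0 then xvar p w a0 0 + w (a0,b0) - t else xvar p w a 0)"
proof (cases "a = a0")
  case True
  have b0: "b0 \<in> {1..p a0}" using u by (auto simp: idx_def)
  have "(\<Sum>b\<in>{1..p a0}. (w((a0,b0):=t)) (a0,b)) = (w((a0,b0):=t)) (a0,b0) + (\<Sum>b\<in>{1..p a0}-{b0}. (w((a0,b0):=t)) (a0,b))"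
    by (rule sum.remove[OF _ b0]) simp
  also have "(\<Sum>b\<in>{1..p a0}-{b0}. (w((a0,b0):=t)) (a0,b)) = (\<Sum>b\<in>{1..p a0}-{b0}. w (a0,b))"
    by (rule sum.cong) auto
  also have "(\<Sum>b\<in>{1..p a0}. w (a0,b)) = w (a0,b0) + (\<Sum>b\<in>{1..p a0}-{b0}. w (a0,b))"
    using b0 by (simp add: sum.remove)
  ultimately show ?thesis using True by (simp add: xvar_def)
next
  case False
  then show ?thesis by (simp add: xvar_def)
qed

lemma Lpow_upd:
  assumes u: "(a0,b0) \<in> idx r p"
  shows "Lpow r p N (w((a0,b0):=t)) = (xvar p w a0 0 + w (a0,b0) - t) ^ N a0 * (\<Prod>a\<in>{1..r}-{a0}. xvar p w a 0 ^ N a)"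
proof -
  have a0: "a0 \<in> {1..r}" using u by (auto simp: idx_def)
  have "Lpow r p N (w((a0,b0):=t)) = xvar p (w((a0,b0):=t)) a0 0 ^ N a0 * (\<Prod>a\<in>{1..r}-{a0}. xvar p (w((a0,b0):=t)) a 0 ^ N a)"
    unfolding Lpow_def by (rule prod.remove) (use a0 in auto)
  also have "(\<Prod>a\<in>{1..r}-{a0}. xvar p (w((a0,b0):=t)) a 0 ^ N a) = (\<Prod>a\<in>{1..r}-{a0}. xvar p w a 0 ^ N a)"
    by (rule prod.cong) (auto simp: xvar0_upd[OF u])
  also have "xvar p (w((a0,b0):=t)) a0 0 = xvar p w a0 0 + w (a0,b0) - t"
    by (subst xvar0_upd[OF u]) simp
  finally show ?thesis .
qed

lemma Lpow_remove:
  assumes a0: "a0 \<in> {1..r}"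
  shows "Lpow r p N w = xvar p w a0 0 ^ N a0 * (\<Prod>a\<in>{1..r}-{a0}. xvar p w a 0 ^ N a)"
  unfolding Lpow_def by (rule prod.remove[OF _ a0]) simp

lemma pderiv_Lpow:
  assumes u: "u \<in> idx r p"
  shows "pderiv_at u (\<lambda>w. c * Lpow r p N w) = (\<lambda>w. c * (- real (N (fst u))) * Lpow r p (N(fst u := N (fst u) - 1)) w)"
proof
  fix w :: "nat \<times> nat \<Rightarrow> real"
  obtain a0 b0 where ab: "u = (a0,b0)" by force
  have a0: "a0 \<in> {1..r}" using u ab by (auto simp: idx_def)
  let ?K = "xvar p w a0 0 + w (a0,b0)"
  let ?R = "\<Prod>a\<in>{1..r}-{a0}. xvar p w a 0 ^ N a"
  have eq: "c * Lpow r p N (w(u:=t)) = c * ((?K - t) ^ N a0 * ?R)" for t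
    unfolding ab using Lpow_upd[OF u[unfolded ab]] by simp
  have "((\<lambda>t. c * ((?K - t) ^ N a0 * ?R)) has_real_derivative c * ((real (N a0) * (?K - t) ^ (N a0 - 1) * (-1)) * ?R)) (at t)" for t
    by (auto intro!: derivative_eq_intros)
  hence "deriv (\<lambda>t. c * Lpow r p N (w(u:=t))) (w u) = c * ((real (N a0) * (?K - w u) ^ (N a0 - 1) * (-1)) * ?R)"
    unfolding eq by (rule DERIV_imp_deriv)
  also have "\<dots> = c * (- real (N (fst u))) * Lpow r p (N(fst u := N (fst u) - 1)) w"
  proof -
    have R: "(\<Prod>a\<in>{1..r}-{a0}. xvar p w a 0 ^ (N(a0 := N a0 - 1)) a) = ?R"
      by (rule prod.cong) auto
    show ?thesis unfolding ab using Lpow_remove[OF a0, where N="N(a0 := N a0 - 1)" and w=w] R by simp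
  qed
  finally show "pderiv_at u (\<lambda>w. c * Lpow r p N w) w = c * (- real (N (fst u))) * Lpow r p (N(fst u := N (fst u) - 1)) w"
    unfolding pderiv_at_def .
qed

lemma pderiv_Lpow_iter:
  assumes u: "u \<in> idx r p"
  shows "(pderiv_at u ^^ l) (\<lambda>w. c * Lpow r p N w) =
    (\<lambda>w. c * ((-1) ^ l * ffr (N (fst u)) l) * Lpow r p (N(fst u := N (fst u) - l)) w)"
proof (induction l)
  case 0
  then show ?case by simp
next
  case (Suc l)
  have "(pderiv_at u ^^ Suc l) (\<lambda>w. c * Lpow r p N w) =
    pderiv_at u (\<lambda>w. c * ((-1) ^ l * ffr (N (fst u)) l) * Lpow r p (N(fst u := N (fst u) - l)) w)"
    by (simp only: funpow.simps(2) o_apply Suc.IH)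
  also have "\<dots> = (\<lambda>w. c * ((-1) ^ l * ffr (N (fst u)) l) * (- real ((N(fst u := N (fst u) - l)) (fst u))) *
      Lpow r p ((N(fst u := N (fst u) - l))(fst u := (N(fst u := N (fst u) - l)) (fst u) - 1)) w)"
    by (rule pderiv_Lpow[OF u])
  also have "\<dots> = (\<lambda>w. c * ((-1) ^ Suc l * ffr (N (fst u)) (Suc l)) * Lpow r p (N(fst u := N (fst u) - Suc l)) w)"
    by (simp add: fun_eq_iff)
  finally show ?case .
qed

definition blk :: "(nat \<times> nat \<Rightarrow> nat) \<Rightarrow> (nat \<times> nat) set \<Rightarrow> nat \<Rightarrow> nat" where
  "blk k S a = (\<Sum>v\<in>S. if fst v = a then k v else 0)"

lemma foldr_Lpow:
  assumes "distinct L" "set L \<subseteq> idx r p"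
  shows "foldr (\<lambda>u G. (pderiv_at u ^^ k u) G) L (\<lambda>w. c * Lpow r p N w) =
    (\<lambda>w. c * (\<Prod>a\<in>{1..r}. (-1) ^ blk k (set L) a * ffr (N a) (blk k (set L) a)) * Lpow r p (\<lambda>a. N a - blk k (set L) a) w)"
  using assms
proof (induction L)
  case Nil
  then show ?case by (simp add: blk_def)
next
  case (Cons u L)
  have u: "u \<in> idx r p" and nu: "u \<notin> set L" and dL: "distinct L" and sL: "set L \<subseteq> idx r p"
    using Cons.prems by auto
  obtain a0 b0 where ab: "u = (a0,b0)" by force
  have a0: "a0 \<in> {1..r}" using u ab by (auto simp: idx_def)
  let ?K = "blk k (set L)"
  let ?K' = "blk k (insert u (set L))"
  have K': "?K' a = ?K a + (if a = a0 then k u else 0)" for a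
    unfolding blk_def using nu ab by simp
  let ?f = "\<lambda>a. (-1) ^ ?K a * ffr (N a) (?K a)"
  let ?f' = "\<lambda>a. (-1) ^ ?K' a * ffr (N a) (?K' a)"
  have "foldr (\<lambda>u G. (pderiv_at u ^^ k u) G) (u # L) (\<lambda>w. c * Lpow r p N w) =
      (pderiv_at u ^^ k u) (\<lambda>w. (c * (\<Prod>a\<in>{1..r}. ?f a)) * Lpow r p (\<lambda>a. N a - ?K a) w)"
    using Cons.IH[OF dL sL] by (simp add: mult.assoc)
  also have "\<dots> = (\<lambda>w. (c * (\<Prod>a\<in>{1..r}. ?f a)) * ((-1) ^ k u * ffr (N a0 - ?K a0) (k u)) *
        Lpow r p ((\<lambda>a. N a - ?K a)(a0 := N a0 - ?K a0 - k u)) w)"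
    by (subst pderiv_Lpow_iter[OF u]) (simp add: ab)
  also have "\<dots> = (\<lambda>w. c * (\<Prod>a\<in>{1..r}. ?f' a) * Lpow r p (\<lambda>a. N a - ?K' a) w)"
  proof -
    have N: "(\<lambda>a. N a - ?K a)(a0 := N a0 - ?K a0 - k u) = (\<lambda>a. N a - ?K' a)"
      by (auto simp: fun_eq_iff K')
    have "(\<Prod>a\<in>{1..r}. ?f' a) = ?f' a0 * (\<Prod>a\<in>{1..r}-{a0}. ?f' a)"
      by (rule prod.remove[OF _ a0]) simp
    also have "(\<Prod>a\<in>{1..r}-{a0}. ?f' a) = (\<Prod>a\<in>{1..r}-{a0}. ?f a)"
      by (rule prod.cong) (auto simp: K')
    also have "?f' a0 = ?f a0 * ((-1) ^ k u * ffr (N a0 - ?K a0) (k u))"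
      by (simp add: K' power_add ffr_add[symmetric])
    finally have "(\<Prod>a\<in>{1..r}. ?f' a) = (\<Prod>a\<in>{1..r}. ?f a) * ((-1) ^ k u * ffr (N a0 - ?K a0) (k u))"
      using prod.remove[OF _ a0, of ?f] by (simp add: mult_ac)
    thus ?thesis unfolding N by (simp add: mult_ac)
  qed
  finally show ?case by simp
qed

lemma Lpow_zero: "Lpow r p N (\<lambda>_. 0) = 1"
  by (simp add: Lpow_def xvar_def)

lemma blk_idx:
  assumes a: "a \<in> {1..r}"
  shows "blk k (idx r p) a = blocksum p k a"
proof -
  have S: "{v\<in>idx r p. fst v = a} = Pair a ` {1..p a}" using a by (auto simp: idx_def)
  have "blk k (idx r p) a = sum k {v\<in>idx r p. fst v = a}"
    unfolding blk_def by (rule sum.inter_filter[OF finite_idx, symmetric])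
  also have "\<dots> = (\<Sum>b\<in>{1..p a}. k (a,b))" unfolding S
    by (subst sum.reindex) (auto simp: inj_on_def)
  finally show ?thesis by (simp add: blocksum_def)
qed

lemma mderiv_Lpow0:
  "mderiv r p m (Lpow r p N) (\<lambda>_. 0) = (\<Prod>a\<in>{1..r}. (-1) ^ blocksum p m a * ffr (N a) (blocksum p m a))"
proof -
  have "mderiv r p m (\<lambda>w. 1 * Lpow r p N w) = (\<lambda>w. 1 * (\<Prod>a\<in>{1..r}. (-1) ^ blk m (idx r p) a * ffr (N a) (blk m (idx r p) a)) * Lpow r p (\<lambda>a. N a - blk m (idx r p) a) w)"
    unfolding mderiv_def set_idx_list[symmetric]
    by (rule foldr_Lpow[OF distinct_idx_list]) (simp add: set_idx_list)
  hence "mderiv r p m (Lpow r p N) = (\<lambda>w. (\<Prod>a\<in>{1..r}. (-1) ^ blk m (idx r p) a * ffr (N a) (blk m (idx r p) a)) * Lpow r p (\<lambda>a. N a - blk m (idx r p) a) w)"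
    by simp
  moreover have "(\<Prod>a\<in>{1..r}. (-1) ^ blk m (idx r p) a * ffr (N a) (blk m (idx r p) a)) =
      (\<Prod>a\<in>{1..r}. (-1) ^ blocksum p m a * ffr (N a) (blocksum p m a))"
    by (rule prod.cong) (simp_all add: blk_idx)
  ultimately show ?thesis by (simp add: Lpow_zero)
qed

definition Mg :: "nat \<Rightarrow> (nat \<Rightarrow> nat) \<Rightarrow> (nat \<Rightarrow> nat) \<Rightarrow> (nat \<Rightarrow> nat \<Rightarrow> nat) \<Rightarrow> (nat \<times> nat \<Rightarrow> real) \<Rightarrow> real" where
  "Mg r n p \<gamma> = (\<lambda>w. \<Prod>a\<in>{1..r}. \<Prod>c\<in>{1..n a}. xvar p w a (\<gamma> a c))"

definition Nz :: "(nat \<Rightarrow> nat) \<Rightarrow> (nat \<Rightarrow> nat \<Rightarrow> nat) \<Rightarrow> nat \<Rightarrow> nat" where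
  "Nz n \<gamma> = (\<lambda>a. card {c\<in>{1..n a}. \<gamma> a c = 0})"

lemma syn_bound: "\<gamma> \<in> syndromes r n p \<Longrightarrow> \<gamma> a c \<le> (if a \<in> {1..r} \<and> c \<in> {1..n a} then p a else 0)"
  unfolding syndromes_def by blast

lemma syn_le: "\<gamma> \<in> syndromes r n p \<Longrightarrow> a \<in> {1..r} \<Longrightarrow> c \<in> {1..n a} \<Longrightarrow> \<gamma> a c \<le> p a"
  using syn_bound[of \<gamma> r n p a c] by simp

lemma syn_out: "\<gamma> \<in> syndromes r n p \<Longrightarrow> \<not> (a \<in> {1..r} \<and> c \<in> {1..n a}) \<Longrightarrow> \<gamma> a c = 0"
  using syn_bound[of \<gamma> r n p a c] by (auto split: if_split_asm)

lemma wt_mi: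
  assumes g: "\<gamma> \<in> syndromes r n p"
  shows "wt n \<gamma> \<in> multi_indices r p"
  unfolding multi_indices_def
proof (safe)
  fix a b assume nu: "(a,b) \<notin> idx r p"
  show "wt n \<gamma> (a,b) = 0"
  proof (cases "b \<ge> 1")
    case True
    have "{c\<in>{1..n a}. \<gamma> a c = b} = {}"
    proof (cases "a \<in> {1..r}")
      case True
      hence b: "b > p a" using nu \<open>b \<ge> 1\<close> by (auto simp: idx_def)
      have "\<gamma> a c \<noteq> b" if "c \<in> {1..n a}" for c using syn_le[OF g True that] b by linarith
      thus ?thesis by blast
    next
      case False
      have "\<gamma> a c \<noteq> b" for c using syn_out[OF g, of a c] False \<open>b \<ge> 1\<close> by auto
      thus ?thesis by blast
    qed
    thus ?thesis by (simp add: wt_def)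
  qed (simp add: wt_def)
qed

lemma zero_upto: "{0..m::nat} = insert 0 {1..m}" by auto

lemma card_split:
  assumes g: "\<gamma> \<in> syndromes r n p" and a: "a \<in> {1..r}"
  shows "n a = Nz n \<gamma> a + blocksum p (wt n \<gamma>) a"
proof -
  let ?C = "{1..n a}"
  have im: "\<gamma> a ` ?C \<subseteq> {0..p a}" using syn_le[OF g a] by auto
  have "n a = (\<Sum>c\<in>?C. 1::nat)" by simp
  also have "\<dots> = (\<Sum>v\<in>{0..p a}. \<Sum>c\<in>{c\<in>?C. \<gamma> a c = v}. 1)"
    by (rule sum.group[symmetric]) (use im in auto)
  also have "\<dots> = (\<Sum>v\<in>{0..p a}. card {c\<in>?C. \<gamma> a c = v})" by simp
  also have "\<dots> = Nz n \<gamma> a + (\<Sum>v\<in>{1..p a}. card {c\<in>?C. \<gamma> a c = v})"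
    unfolding zero_upto by (simp add: Nz_def)
  also have "(\<Sum>v\<in>{1..p a}. card {c\<in>?C. \<gamma> a c = v}) = blocksum p (wt n \<gamma>) a"
    unfolding blocksum_def wt_def by (rule sum.cong) auto
  finally show ?thesis .
qed

lemma Mg_factor:
  assumes g: "\<gamma> \<in> syndromes r n p"
  shows "Mg r n p \<gamma> w = Lpow r p (Nz n \<gamma>) w * monom r p (wt n \<gamma>) w"
proof -
  have blk: "(\<Prod>c\<in>{1..n a}. xvar p w a (\<gamma> a c)) = xvar p w a 0 ^ Nz n \<gamma> a * (\<Prod>b\<in>{1..p a}. w (a,b) ^ wt n \<gamma> (a,b))"
    if a: "a \<in> {1..r}" for a
  proof -
    let ?C = "{1..n a}"
    have im: "\<gamma> a ` ?C \<subseteq> {0..p a}" using syn_le[OF g a] by auto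
    have "(\<Prod>c\<in>?C. xvar p w a (\<gamma> a c)) = (\<Prod>v\<in>{0..p a}. \<Prod>c\<in>{c\<in>?C. \<gamma> a c = v}. xvar p w a (\<gamma> a c))"
      by (rule prod.group[symmetric]) (use im in auto)
    also have "\<dots> = (\<Prod>v\<in>{0..p a}. xvar p w a v ^ card {c\<in>?C. \<gamma> a c = v})"
    proof (rule prod.cong[OF refl])
      fix v
      have "(\<Prod>c\<in>{c\<in>?C. \<gamma> a c = v}. xvar p w a (\<gamma> a c)) = (\<Prod>c\<in>{c\<in>?C. \<gamma> a c = v}. xvar p w a v)"
        by (rule prod.cong) auto
      thus "(\<Prod>c\<in>{c\<in>?C. \<gamma> a c = v}. xvar p w a (\<gamma> a c)) = xvar p w a v ^ card {c\<in>?C. \<gamma> a c = v}"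
        by simp
    qed
    also have "\<dots> = xvar p w a 0 ^ Nz n \<gamma> a * (\<Prod>v\<in>{1..p a}. xvar p w a v ^ card {c\<in>?C. \<gamma> a c = v})"
      unfolding zero_upto by (simp add: Nz_def)
    also have "(\<Prod>v\<in>{1..p a}. xvar p w a v ^ card {c\<in>?C. \<gamma> a c = v}) = (\<Prod>b\<in>{1..p a}. w (a,b) ^ wt n \<gamma> (a,b))"
      by (rule prod.cong) (auto simp: xvar_def wt_def)
    finally show ?thesis .
  qed
  have "Mg r n p \<gamma> w = (\<Prod>a\<in>{1..r}. xvar p w a 0 ^ Nz n \<gamma> a * (\<Prod>b\<in>{1..p a}. w (a,b) ^ wt n \<gamma> (a,b)))"
    unfolding Mg_def by (rule prod.cong[OF refl], rule blk) simp
  also have "\<dots> = Lpow r p (Nz n \<gamma>) w * (\<Prod>a\<in>{1..r}. \<Prod>b\<in>{1..p a}. w (a,b) ^ wt n \<gamma> (a,b))"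
    by (simp add: prod.distrib Lpow_def)
  also have "(\<Prod>a\<in>{1..r}. \<Prod>b\<in>{1..p a}. w (a,b) ^ wt n \<gamma> (a,b)) = monom r p (wt n \<gamma>) w"
    unfolding monom_def idx_Sigma by (simp add: prod.Sigma split_beta)
  finally show ?thesis .
qed

lemma isPoly_xvar0:
  assumes a: "a \<in> {1..r}"
  shows "isPoly r p (\<lambda>w. xvar p w a 0)"
proof -
  have "isPoly r p (\<lambda>w. (\<lambda>_. 1) w - (\<Sum>b\<in>{1..p a}. 1 * (\<lambda>b w. w (a,b)) b w))"
    by (rule isPoly_diff[OF isPoly_const isPoly_sum]) (use a in \<open>auto intro!: isPoly_coord simp: idx_def\<close>)
  thus ?thesis by (simp add: xvar_def)
qed

lemma isPoly_Lpow: "isPoly r p (Lpow r p N)"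
proof -
  have "isPoly r p (\<lambda>w. \<Prod>a\<in>{1..r}. (\<lambda>a w. xvar p w a 0 ^ N a) a w)"
    by (rule isPoly_prod) (auto intro!: isPoly_power isPoly_xvar0)
  moreover have "(\<lambda>w. \<Prod>a\<in>{1..r}. (\<lambda>a w. xvar p w a 0 ^ N a) a w) = Lpow r p N"
    by (simp add: Lpow_def fun_eq_iff)
  ultimately show ?thesis by simp
qed

lemma monom_polyf: "monom r p s = polyf r p {0::nat} (\<lambda>_. 1) (\<lambda>_. s)"
  by (simp add: polyf_def fun_eq_iff)

lemma isPoly_monom: "s \<in> multi_indices r p \<Longrightarrow> isPoly r p (monom r p s)"
  by (rule isPolyI[OF _ _ monom_polyf]) auto

lemma mderiv_monom0:
  assumes "s \<in> multi_indices r p" "m \<in> multi_indices r p"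
  shows "mderiv r p m (monom r p s) (\<lambda>_. 0) = kf r p m * (if s = m then 1 else 0)"
  unfolding monom_polyf using assms by (subst mderiv_polyf0) auto

lemma isPoly_Mg:
  assumes g: "\<gamma> \<in> syndromes r n p"
  shows "isPoly r p (Mg r n p \<gamma>)"
proof -
  have "Mg r n p \<gamma> = (\<lambda>w. Lpow r p (Nz n \<gamma>) w * monom r p (wt n \<gamma>) w)"
    using Mg_factor[OF g] by (simp add: fun_eq_iff)
  thus ?thesis using isPoly_mult[OF isPoly_Lpow isPoly_monom[OF wt_mi[OF g]]] by simp
qed

lemma choose_fact_div:
  assumes "s \<le> (i::nat)"
  shows "real ((i - s + s) choose (i - s)) * fact s = fact i / fact (i - s)"
proof -
  have "fact (i - s) * fact (i - (i - s)) * (i choose (i - s)) = fact i"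
    by (rule binomial_fact_lemma) simp
  hence "real (fact (i - s) * fact (i - (i - s)) * (i choose (i - s))) = real (fact i)" by simp
  hence "fact (i - s) * (fact s * real (i choose (i - s))) = (fact i :: real)"
    using assms by (simp add: of_nat_mult mult_ac)
  thus ?thesis using assms by (simp add: field_simps)
qed

lemma ffr_div: "l \<le> m \<Longrightarrow> ffr m l = fact m / fact (m - l)"
  using ffr_fact[of l m] by (simp add: field_simps)

lemma Scoef_eq:
  assumes si: "mle s i"
    and N: "\<forall>a\<in>{1..r}. N a = n a - blocksum p s a \<and> blocksum p s a \<le> n a"
  shows "Ccoef r p (\<lambda>u. i u - s u) s * (\<Prod>a\<in>{1..r}. (-1) ^ blocksum p (\<lambda>u. i u - s u) a * ffr (N a) (blocksum p (\<lambda>u. i u - s u) a)) * kf r p s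
     = Scoef r n p i s"
proof -
  let ?d = "\<lambda>u. i u - s u"
  have sle: "s u \<le> i u" for u using si unfolding mle_def by blast
  have bsd: "blocksum p ?d a = blocksum p i a - blocksum p s a" for a
    unfolding blocksum_def by (rule sum_subtractf_nat) (simp add: sle)
  have bsle: "blocksum p s a \<le> blocksum p i a" for a
    unfolding blocksum_def by (rule sum_mono) (simp add: sle)
  have CK: "Ccoef r p ?d s * kf r p s = (\<Prod>a\<in>{1..r}. \<Prod>b\<in>{1..p a}. fact (i (a,b)) / fact (i (a,b) - s (a,b)))"
  proof -
    have "Ccoef r p ?d s * kf r p s = (\<Prod>u\<in>idx r p. real ((?d u + s u) choose ?d u) * fact (s u))"
      by (simp add: Ccoef_def kf_def prod.distrib)
    also have "\<dots> = (\<Prod>u\<in>idx r p. fact (i u) / fact (i u - s u))"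
      by (rule prod.cong[OF refl]) (rule choose_fact_div[OF sle])
    also have "\<dots> = (\<Prod>a\<in>{1..r}. \<Prod>b\<in>{1..p a}. fact (i (a,b)) / fact (i (a,b) - s (a,b)))"
      unfolding idx_Sigma by (simp add: prod.Sigma split_beta)
    finally show ?thesis .
  qed
  have "Ccoef r p ?d s * (\<Prod>a\<in>{1..r}. (-1) ^ blocksum p ?d a * ffr (N a) (blocksum p ?d a)) * kf r p s
     = (\<Prod>a\<in>{1..r}. (-1) ^ blocksum p ?d a * ffr (N a) (blocksum p ?d a)) * (Ccoef r p ?d s * kf r p s)"
    by (simp only: mult_ac)
  also have "\<dots> = (\<Prod>a\<in>{1..r}. (-1) ^ blocksum p ?d a * ffr (N a) (blocksum p ?d a) * (\<Prod>b\<in>{1..p a}. fact (i (a,b)) / fact (i (a,b) - s (a,b))))"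
    unfolding CK by (simp add: prod.distrib)
  also have "\<dots> = Scoef r n p i s"
    unfolding Scoef_def
  proof (rule prod.cong[OF refl])
    fix a assume a: "a \<in> {1..r}"
    have Na: "N a = n a - blocksum p s a" and sn: "blocksum p s a \<le> n a" using N a by auto
    show "(-1) ^ blocksum p ?d a * ffr (N a) (blocksum p ?d a) * (\<Prod>b\<in>{1..p a}. fact (i (a,b)) / fact (i (a,b) - s (a,b))) =
      (if n a \<ge> blocksum p i a then
        (-1) ^ (blocksum p i a - blocksum p s a)
        * fact (n a - blocksum p s a) / fact (n a - blocksum p i a)
        * (\<Prod>b\<in>{1..p a}. fact (i (a,b)) / fact (i (a,b) - s (a,b)))
      else 0)"
    proof (cases "n a \<ge> blocksum p i a")
      case True
      have "ffr (N a) (blocksum p ?d a) = fact (n a - blocksum p s a) / fact (n a - blocksum p i a)"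
        unfolding Na bsd using True bsle[of a] sn by (subst ffr_div) (auto simp: diff_diff_eq2 intro!: arg_cong[where f=fact])
      then show ?thesis using True by (simp add: bsd)
    next
      case False
      have "ffr (N a) (blocksum p ?d a) = 0"
        unfolding Na bsd using False bsle[of a] sn by (intro ffr_gt) linarith
      then show ?thesis using False by simp
    qed
  qed
  finally show ?thesis .
qed

lemma deriv_M:
  assumes g: "\<gamma> \<in> syndromes r n p" and i: "i \<in> multi_indices r p"
  shows "mderiv r p i (Mg r n p \<gamma>) (\<lambda>_. 0) = (if mle (wt n \<gamma>) i then Scoef r n p i (wt n \<gamma>) else 0)"
proof -
  define s where "s = wt n \<gamma>"
  define N where "N = Nz n \<gamma>"
  have s: "s \<in> multi_indices r p" using wt_mi[OF g] s_def by simp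
  have Mg_eq: "Mg r n p \<gamma> = (\<lambda>w. Lpow r p N w * monom r p s w)"
    using Mg_factor[OF g] by (simp add: fun_eq_iff s_def N_def)
  let ?I = "{j. mle j i}"
  have fI: "finite ?I" by (rule finite_mle[OF i])
  have "mderiv r p i (Mg r n p \<gamma>) (\<lambda>_. 0) = (\<Sum>j\<in>?I. Ccoef r p j (\<lambda>u. i u - j u) * mderiv r p j (Lpow r p N) (\<lambda>_. 0) * mderiv r p (\<lambda>u. i u - j u) (monom r p s) (\<lambda>_. 0))"
    unfolding Mg_eq by (rule leibniz0[OF isPoly_Lpow isPoly_monom[OF s] i])
  also have "\<dots> = (\<Sum>j\<in>?I. Ccoef r p j (\<lambda>u. i u - j u) * mderiv r p j (Lpow r p N) (\<lambda>_. 0) * (kf r p (\<lambda>u. i u - j u) * (if s = (\<lambda>u. i u - j u) then 1 else 0)))"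
    by (rule sum.cong[OF refl]) (simp add: mderiv_monom0[OF s diff_mi[OF i]])
  also have "\<dots> = (if mle s i then Scoef r n p i s else 0)"
  proof (cases "mle s i")
    case False
    have "s \<noteq> (\<lambda>u. i u - j u)" for j using False by (auto simp: mle_def)
    then show ?thesis using False by simp
  next
    case True
    define d where "d = (\<lambda>u. i u - s u)"
    have sle: "s u \<le> i u" for u using True unfolding mle_def by blast
    have dI: "d \<in> ?I" by (simp add: d_def mle_def)
    have ids: "(\<lambda>u. i u - d u) = s" using sle by (auto simp: d_def fun_eq_iff)
    have "(\<Sum>j\<in>?I. Ccoef r p j (\<lambda>u. i u - j u) * mderiv r p j (Lpow r p N) (\<lambda>_. 0) * (kf r p (\<lambda>u. i u - j u) * (if s = (\<lambda>u. i u - j u) then 1 else 0)))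
        = (\<Sum>j\<in>?I. if j = d then Ccoef r p j (\<lambda>u. i u - j u) * mderiv r p j (Lpow r p N) (\<lambda>_. 0) * kf r p (\<lambda>u. i u - j u) else 0)"
    proof (rule sum.cong[OF refl])
      fix j assume "j \<in> ?I"
      hence jle: "j u \<le> i u" for u unfolding mle_def by blast
      have "(s = (\<lambda>u. i u - j u)) \<longleftrightarrow> j = d"
        using jle sle by (auto simp: d_def fun_eq_iff)
      thus "Ccoef r p j (\<lambda>u. i u - j u) * mderiv r p j (Lpow r p N) (\<lambda>_. 0) * (kf r p (\<lambda>u. i u - j u) * (if s = (\<lambda>u. i u - j u) then 1 else 0))
         = (if j = d then Ccoef r p j (\<lambda>u. i u - j u) * mderiv r p j (Lpow r p N) (\<lambda>_. 0) * kf r p (\<lambda>u. i u - j u) else 0)"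
        by simp
    qed
    also have "\<dots> = Ccoef r p d s * mderiv r p d (Lpow r p N) (\<lambda>_. 0) * kf r p s"
      using fI dI by (simp add: ids)
    also have "\<dots> = Scoef r n p i s"
      unfolding mderiv_Lpow0 d_def
    proof (rule Scoef_eq[OF True])
      show "\<forall>a\<in>{1..r}. N a = n a - blocksum p s a \<and> blocksum p s a \<le> n a"
        using card_split[OF g] unfolding N_def s_def by (metis add_diff_cancel_right' le_add2)
    qed
    finally show ?thesis using True by simp
  qed
  finally show ?thesis by (simp add: s_def)
qed

lemma finite_syndromes: "finite (syndromes r n p)"
proof -
  let ?D = "SIGMA a:{1..r}. {1..n a}"
  let ?B = "{0..(\<Sum>a\<in>{1..r}. p a)}"
  have "syndromes r n p \<subseteq> curry ` {f. \<forall>x. (x \<in> ?D \<longrightarrow> f x \<in> ?B) \<and> (x \<notin> ?D \<longrightarrow> f x = 0)}"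
  proof
    fix \<gamma> assume g: "\<gamma> \<in> syndromes r n p"
    have "case_prod \<gamma> \<in> {f. \<forall>x. (x \<in> ?D \<longrightarrow> f x \<in> ?B) \<and> (x \<notin> ?D \<longrightarrow> f x = 0)}"
    proof (intro CollectI allI conjI impI)
      fix x :: "nat \<times> nat"
      obtain a c where x: "x = (a,c)" by force
      show "case_prod \<gamma> x \<in> ?B" if "x \<in> ?D"
      proof -
        have ac: "a \<in> {1..r}" "c \<in> {1..n a}" using that x by auto
        hence "\<gamma> a c \<le> p a" by (rule syn_le[OF g])
        also have "p a \<le> (\<Sum>a\<in>{1..r}. p a)" by (rule member_le_sum) (use ac in auto)
        finally show ?thesis using x by simp
      qed
      show "case_prod \<gamma> x = 0" if "x \<notin> ?D"
        using that x syn_out[OF g, of a c] by auto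
    qed
    moreover have "\<gamma> = curry (case_prod \<gamma>)" by simp
    ultimately show "\<gamma> \<in> curry ` {f. \<forall>x. (x \<in> ?D \<longrightarrow> f x \<in> ?B) \<and> (x \<notin> ?D \<longrightarrow> f x = 0)}" by blast
  qed
  moreover have "finite (curry ` {f. \<forall>x. (x \<in> ?D \<longrightarrow> f x \<in> ?B) \<and> (x \<notin> ?D \<longrightarrow> f x = (0::nat))})"
    by (intro finite_imageI finite_set_of_finite_funs) auto
  ultimately show ?thesis by (rule finite_subset)
qed

lemma wt_zero:
  assumes g: "\<gamma> \<in> syndromes r n p" and w: "wt n \<gamma> = (\<lambda>_. 0)"
  shows "\<gamma> = (\<lambda>a c. 0)"
proof (rule ccontr)
  assume "\<gamma> \<noteq> (\<lambda>a c. 0)"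
  then obtain a c where ne: "\<gamma> a c \<noteq> 0" by (auto simp: fun_eq_iff)
  hence ac: "a \<in> {1..r}" "c \<in> {1..n a}" using syn_out[OF g, of a c] by auto
  let ?b = "\<gamma> a c"
  have "c \<in> {c'\<in>{1..n a}. \<gamma> a c' = ?b}" using ac by simp
  hence "card {c'\<in>{1..n a}. \<gamma> a c' = ?b} \<noteq> 0" by auto
  hence "wt n \<gamma> (a, ?b) \<noteq> 0" using ne by (simp add: wt_def)
  thus False using w by simp
qed

lemma gerr_eq:
  fixes y :: "'i \<Rightarrow> 'q::finite"
  shows "gerr r n p y \<pi> x = (\<lambda>w. \<Sum>\<gamma>\<in>{\<gamma>\<in>syndromes r n p. \<pi> x \<gamma> \<noteq> y x}. 1 * Mg r n p \<gamma> w)"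
proof
  fix w
  have "gerr r n p y \<pi> x w = (\<Sum>\<tau>\<in>UNIV - {y x}. \<Sum>\<gamma>\<in>syndromes r n p. if \<tau> = \<pi> x \<gamma> then Mg r n p \<gamma> w else 0)"
    unfolding gerr_def fpoly_def Mg_def by simp
  also have "\<dots> = (\<Sum>\<gamma>\<in>syndromes r n p. \<Sum>\<tau>\<in>UNIV - {y x}. if \<tau> = \<pi> x \<gamma> then Mg r n p \<gamma> w else 0)"
    by (rule sum.swap)
  also have "\<dots> = (\<Sum>\<gamma>\<in>syndromes r n p. if \<pi> x \<gamma> \<noteq> y x then Mg r n p \<gamma> w else 0)"
    by (rule sum.cong[OF refl]) simp
  also have "\<dots> = (\<Sum>\<gamma>\<in>{\<gamma>\<in>syndromes r n p. \<pi> x \<gamma> \<noteq> y x}. 1 * Mg r n p \<gamma> w)"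
    by (simp add: sum.inter_filter[OF finite_syndromes])
  finally show "gerr r n p y \<pi> x w = (\<Sum>\<gamma>\<in>{\<gamma>\<in>syndromes r n p. \<pi> x \<gamma> \<noteq> y x}. 1 * Mg r n p \<gamma> w)" .
qed

lemma isPoly_gerr: "isPoly r p (gerr r n p y \<pi> x)"
  unfolding gerr_eq
  by (rule isPoly_sum) (auto intro: finite_subset[OF _ finite_syndromes] isPoly_Mg)

lemma Acount_eq:
  "real (Acount r n p y \<pi> s x) = (\<Sum>\<gamma>\<in>{\<gamma>\<in>syndromes r n p. \<pi> x \<gamma> \<noteq> y x}. if wt n \<gamma> = s then 1 else 0)"
proof -
  have fE: "finite {\<gamma>\<in>syndromes r n p. \<pi> x \<gamma> \<noteq> y x}" using finite_syndromes by simp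
  have "{\<gamma>\<in>syndromes r n p. wt n \<gamma> = s \<and> \<pi> x \<gamma> \<noteq> y x} = {\<gamma>\<in>{\<gamma>\<in>syndromes r n p. \<pi> x \<gamma> \<noteq> y x}. wt n \<gamma> = s}"
    by auto
  hence "real (Acount r n p y \<pi> s x) = (\<Sum>\<gamma>\<in>{\<gamma>\<in>{\<gamma>\<in>syndromes r n p. \<pi> x \<gamma> \<noteq> y x}. wt n \<gamma> = s}. 1)"
    by (simp add: Acount_def)
  also have "\<dots> = (\<Sum>\<gamma>\<in>{\<gamma>\<in>syndromes r n p. \<pi> x \<gamma> \<noteq> y x}. if wt n \<gamma> = s then 1 else 0)"
    by (rule sum.inter_filter[OF fE])
  finally show ?thesis .
qed

lemma deriv_gerr:
  assumes z: "\<forall>x. \<pi> x (\<lambda>a c. 0) = y x" and i: "i \<in> multi_indices r p"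
  shows "mderiv r p i (gerr r n p y \<pi> x) (\<lambda>_. 0) =
    (\<Sum>s\<in>{s. mle s i \<and> s \<noteq> (\<lambda>_. 0)}. Scoef r n p i s * real (Acount r n p y \<pi> s x))"
proof -
  let ?E = "{\<gamma>\<in>syndromes r n p. \<pi> x \<gamma> \<noteq> y x}"
  let ?T = "{s. mle s i \<and> s \<noteq> (\<lambda>_. 0)}"
  have fE: "finite ?E" using finite_syndromes by simp
  have fT: "finite ?T" by (rule finite_subset[OF _ finite_mle[OF i]]) auto
  have "mderiv r p i (gerr r n p y \<pi> x) (\<lambda>_. 0) = (\<Sum>\<gamma>\<in>?E. 1 * mderiv r p i (Mg r n p \<gamma>) (\<lambda>_. 0))"
    unfolding gerr_eq by (rule mderiv_sum0[OF fE _ i]) (auto intro: isPoly_Mg)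
  also have "\<dots> = (\<Sum>\<gamma>\<in>?E. if wt n \<gamma> \<in> ?T then Scoef r n p i (wt n \<gamma>) else 0)"
  proof (rule sum.cong[OF refl])
    fix \<gamma> assume g: "\<gamma> \<in> ?E"
    have "wt n \<gamma> \<noteq> (\<lambda>_. 0)" using wt_zero[of \<gamma> r n p] g z by auto
    thus "1 * mderiv r p i (Mg r n p \<gamma>) (\<lambda>_. 0) = (if wt n \<gamma> \<in> ?T then Scoef r n p i (wt n \<gamma>) else 0)"
      using deriv_M[of \<gamma> r n p i] g i by simp
  qed
  also have "\<dots> = (\<Sum>\<gamma>\<in>?E. \<Sum>s\<in>?T. if wt n \<gamma> = s then Scoef r n p i s else 0)"
    using fT by (simp add: if_distrib cong: if_cong)
  also have "\<dots> = (\<Sum>s\<in>?T. \<Sum>\<gamma>\<in>?E. if wt n \<gamma> = s then Scoef r n p i s else 0)"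
    by (rule sum.swap)
  also have "\<dots> = (\<Sum>s\<in>?T. Scoef r n p i s * real (Acount r n p y \<pi> s x))"
    unfolding Acount_eq sum_distrib_left by (auto intro!: sum.cong)
  finally show ?thesis .
qed

lemma rearrange:
  fixes q :: "'i::finite \<Rightarrow> real"
  assumes fS: "finite S" and fT: "finite T"
  shows "(\<Sum>x\<in>UNIV. q x * (C * (\<Sum>s\<in>S. f s * A s x) * (\<Sum>t\<in>T. g t * B t x))) =
    (\<Sum>s\<in>S. \<Sum>t\<in>T. C * f s * g t * (\<Sum>x\<in>UNIV. q x * A s x * B t x))"
proof -
  have "(\<Sum>x\<in>UNIV. q x * (C * (\<Sum>s\<in>S. f s * A s x) * (\<Sum>t\<in>T. g t * B t x))) =
     (\<Sum>x\<in>UNIV. \<Sum>s\<in>S. \<Sum>t\<in>T. C * f s * g t * (q x * A s x * B t x))"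
    by (simp add: sum_product sum_distrib_left mult_ac)
  also have "\<dots> = (\<Sum>s\<in>S. \<Sum>x\<in>UNIV. \<Sum>t\<in>T. C * f s * g t * (q x * A s x * B t x))"
    by (rule sum.swap)
  also have "\<dots> = (\<Sum>s\<in>S. \<Sum>t\<in>T. \<Sum>x\<in>UNIV. C * f s * g t * (q x * A s x * B t x))"
    by (rule sum.cong[OF refl], rule sum.swap)
  also have "\<dots> = (\<Sum>s\<in>S. \<Sum>t\<in>T. C * f s * g t * (\<Sum>x\<in>UNIV. q x * A s x * B t x))"
    by (simp add: sum_distrib_left)
  finally show ?thesis .
qed

theorem mainTheorem7:
  fixes r :: nat and n p :: "nat \<Rightarrow> nat"
    and q :: "'i::finite \<Rightarrow> real" and y :: "'i \<Rightarrow> 'q::finite"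
    and \<pi> :: "'i \<Rightarrow> (nat \<Rightarrow> nat \<Rightarrow> nat) \<Rightarrow> 'q"
    and k :: "nat \<times> nat \<Rightarrow> nat"
  assumes "r \<ge> 1"
    and "\<forall>a\<in>{1..r}. n a \<ge> 1 \<and> p a \<ge> 1"
    and "\<forall>x. q x \<ge> 0" and "(\<Sum>x\<in>UNIV. q x) = 1"
    and "\<forall>x. \<pi> x (\<lambda>a c. 0) = y x"
    and "k \<in> multi_indices r p" and "msum r p k > 0"
  shows "mderiv r p k (Hfun r n p q y \<pi>) (\<lambda>_. 0) =
    (\<Sum>i\<in>{i. mle i k \<and> i \<noteq> (\<lambda>_. 0) \<and> (\<lambda>u. k u - i u) \<noteq> (\<lambda>_. 0)}.
       let j = (\<lambda>u. k u - i u) in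
       (\<Sum>s\<in>{s. mle s i \<and> s \<noteq> (\<lambda>_. 0)}. \<Sum>t\<in>{t. mle t j \<and> t \<noteq> (\<lambda>_. 0)}.
          Ccoef r p i j * Scoef r n p i s * Scoef r n p j t
          * (\<Sum>x\<in>UNIV. q x * real (Acount r n p y \<pi> s x) * real (Acount r n p y \<pi> t x))))"
proof -
  have k: "k \<in> multi_indices r p" using assms(6) .
  have z: "\<forall>x. \<pi> x (\<lambda>a c. 0) = y x" using assms(5) .
  let ?G = "\<lambda>x. gerr r n p y \<pi> x"
  let ?I = "{i. mle i k}"
  let ?I' = "{i. mle i k \<and> i \<noteq> (\<lambda>_. 0) \<and> (\<lambda>u. k u - i u) \<noteq> (\<lambda>_. 0)}"
  let ?T = "\<lambda>i. {s. mle s i \<and> s \<noteq> (\<lambda>_. 0)}"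
  let ?P = "\<lambda>x i. \<Sum>s\<in>?T i. Scoef r n p i s * real (Acount r n p y \<pi> s x)"
  have fI: "finite ?I" by (rule finite_mle[OF k])
  have fT: "finite (?T i)" if "i \<in> multi_indices r p" for i
    by (rule finite_subset[OF _ finite_mle[OF that]]) auto
  have H: "Hfun r n p q y \<pi> = (\<lambda>w. \<Sum>x\<in>UNIV. q x * (?G x w * ?G x w))"
    by (simp add: Hfun_def power2_eq_square fun_eq_iff)
  have "mderiv r p k (Hfun r n p q y \<pi>) (\<lambda>_. 0) = (\<Sum>x\<in>UNIV. q x * mderiv r p k (\<lambda>w. ?G x w * ?G x w) (\<lambda>_. 0))"
    unfolding H by (rule mderiv_sum0[OF _ _ k]) (auto intro: isPoly_mult isPoly_gerr)
  also have "\<dots> = (\<Sum>x\<in>UNIV. q x * (\<Sum>i\<in>?I. Ccoef r p i (\<lambda>u. k u - i u) * mderiv r p i (?G x) (\<lambda>_. 0) * mderiv r p (\<lambda>u. k u - i u) (?G x) (\<lambda>_. 0)))"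
    by (rule sum.cong[OF refl]) (simp add: leibniz0[OF isPoly_gerr isPoly_gerr k])
  also have "\<dots> = (\<Sum>x\<in>UNIV. q x * (\<Sum>i\<in>?I. Ccoef r p i (\<lambda>u. k u - i u) * ?P x i * ?P x (\<lambda>u. k u - i u)))"
  proof (intro sum.cong refl arg_cong[where f="\<lambda>z. q _ * z"])
    fix x i assume "i \<in> ?I"
    hence i: "i \<in> multi_indices r p" using mle_mi[OF k] by simp
    show "Ccoef r p i (\<lambda>u. k u - i u) * mderiv r p i (?G x) (\<lambda>_. 0) * mderiv r p (\<lambda>u. k u - i u) (?G x) (\<lambda>_. 0) =
          Ccoef r p i (\<lambda>u. k u - i u) * ?P x i * ?P x (\<lambda>u. k u - i u)"
      by (simp add: deriv_gerr[where \<pi>=\<pi> and y=y, OF z i] deriv_gerr[where \<pi>=\<pi> and y=y, OF z diff_mi[OF k]])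
  qed
  also have "\<dots> = (\<Sum>x\<in>UNIV. q x * (\<Sum>i\<in>?I'. Ccoef r p i (\<lambda>u. k u - i u) * ?P x i * ?P x (\<lambda>u. k u - i u)))"
  proof (rule sum.cong[OF refl])
    fix x
    have P0: "?P x (\<lambda>_. 0) = 0"
    proof -
      have E: "?T (\<lambda>_. 0) = {}" by (auto simp: mle_def fun_eq_iff)
      show ?thesis by (simp only: E sum.empty)
    qed
    have "(\<Sum>i\<in>?I. Ccoef r p i (\<lambda>u. k u - i u) * ?P x i * ?P x (\<lambda>u. k u - i u)) =
          (\<Sum>i\<in>?I'. Ccoef r p i (\<lambda>u. k u - i u) * ?P x i * ?P x (\<lambda>u. k u - i u))"
      by (rule sum.mono_neutral_right[OF fI]) (auto simp: P0)
    thus "q x * (\<Sum>i\<in>?I. Ccoef r p i (\<lambda>u. k u - i u) * ?P x i * ?P x (\<lambda>u. k u - i u)) =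
          q x * (\<Sum>i\<in>?I'. Ccoef r p i (\<lambda>u. k u - i u) * ?P x i * ?P x (\<lambda>u. k u - i u))" by simp
  qed
  also have "\<dots> = (\<Sum>i\<in>?I'. \<Sum>x\<in>UNIV. q x * (Ccoef r p i (\<lambda>u. k u - i u) * ?P x i * ?P x (\<lambda>u. k u - i u)))"
    by (simp add: sum_distrib_left sum.swap[of _ UNIV])
  also have "\<dots> = (\<Sum>i\<in>?I'.
       let j = (\<lambda>u. k u - i u) in
       (\<Sum>s\<in>{s. mle s i \<and> s \<noteq> (\<lambda>_. 0)}. \<Sum>t\<in>{t. mle t j \<and> t \<noteq> (\<lambda>_. 0)}.
          Ccoef r p i j * Scoef r n p i s * Scoef r n p j t
          * (\<Sum>x\<in>UNIV. q x * real (Acount r n p y \<pi> s x) * real (Acount r n p y \<pi> t x))))"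
    unfolding Let_def
  proof (rule sum.cong[OF refl])
    fix i assume "i \<in> ?I'"
    hence i: "i \<in> multi_indices r p" using mle_mi[OF k] by simp
    show "(\<Sum>x\<in>UNIV. q x * (Ccoef r p i (\<lambda>u. k u - i u) * ?P x i * ?P x (\<lambda>u. k u - i u))) =
      (\<Sum>s\<in>?T i. \<Sum>t\<in>?T (\<lambda>u. k u - i u).
          Ccoef r p i (\<lambda>u. k u - i u) * Scoef r n p i s * Scoef r n p (\<lambda>u. k u - i u) t
          * (\<Sum>x\<in>UNIV. q x * real (Acount r n p y \<pi> s x) * real (Acount r n p y \<pi> t x)))"
      by (rule rearrange[OF fT[OF i] fT[OF diff_mi[OF k]]])
  qed
  finally show ?thesis .
qed

end
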